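(* There is no axis rule $f$ (defined for profiles over every finite candidate set) that is a scoring rule, neutral, consistent with linearity, resistant to cloning, and satisfies clone-proximity.
   Context: Candidates come from a fixed infinite universe; rules are defined for profiles over every finite candidate set $C$. An approval ballot is a nonempty subset $A\subseteq C$; a profile over $C$ is a finite sequence of ballots. An axis is a strict linear order $\triangleleft$ on $C$, $\overleftarrow{\triangleleft}$ its reverse; a ballot $A$ is an interval of $\triangleleft$ if for all $a,b\in A$ and every $c$ with $a\triangleleft c\triangleleft b$ we have $c\in A$. A profile is linear if some axis makes all its ballots intervals; $\mathrm{con}(P)$ is the set of such axes. An axis rule maps each profile $P$ over $C$ to a nonempty set $f(P)$ of axes on $C$ closed under reversal. $f$ is a scoring rule if for every finite $C$ there is a cost function $\mathrm{cost}_C:(2^C\setminus\{\emptyset\})\times\{\text{axes on }C\}\to\mathbb R_{\ge0}$ with $f(P)=\arg\min_{\triangleleft}\sum_{A\in P}\mathrm{cost}_C(A,\triangleleft)$ for every profile $P$ over $C$. $f$ is neutral if for every bijection $\pi:C\to C'$, $f(\pi(P))=\pi(f(P))$ (renaming candidates in ballots and axes). $f$ is consistent with linearity if $f(P)=\mathrm{con}(P)$ for every linear profile. Two candidates $a,a'$ are clones in $P$ if for every $A\in P$, $a\in A$ iff $a'\in A$. $f$ satisfies clone-proximity if for every profile $P$ with clones $a,a'$, every $\triangleleft\in f(P)$, every $x$ with $a\triangleleft x\triangleleft a'$ or $a'\triangleleft x\triangleleft a$, and every $A\in P$ with $a,a'\in A$, we have $x\in A$. For $c\in C$, $P_{-c}$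 is the profile over $C\setminus\{c\}$ obtained by removing $c$ from every ballot (ballots becoming empty are discarded), and $\triangleleft_{-c}$ is the restriction of $\triangleleft$ to $C\setminus\{c\}$. $f$ is resistant to cloning if for every profile $P$ with clones $a,a'$: (1) for every $\triangleleft\in f(P)$, $\triangleleft_{-a}\in f(P_{-a})$; and (2) for every $\triangleleft^*\in f(P_{-a})$ there is $\triangleleft\in f(P)$ with $\triangleleft_{-a}=\triangleleft^*$. *)

theory Defs
  imports Complex_Main
begin

definition is_axis :: "'a set \<Rightarrow> 'a rel \<Rightarrow> bool" where
  "is_axis C r \<longleftrightarrow> strict_linear_order_on C r \<and> r \<subseteq> C \<times> C"

definition axes :: "'a set \<Rightarrow> 'a rel set" where
  "axes C = {r. is_axis C r}"

definition is_interval :: "'a rel \<Rightarrow> 'a set \<Rightarrow> bool" where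
  "is_interval r A \<longleftrightarrow> (\<forall>a\<in>A. \<forall>b\<in>A. \<forall>c. (a, c) \<in> r \<and> (c, b) \<in> r \<longrightarrow> c \<in> A)"

definition is_profile :: "'a set \<Rightarrow> 'a set list \<Rightarrow> bool" where
  "is_profile C P \<longleftrightarrow> (\<forall>A\<in>set P. A \<noteq> {} \<and> A \<subseteq> C)"

definition con :: "'a set \<Rightarrow> 'a set list \<Rightarrow> 'a rel set" where
  "con C P = {r \<in> axes C. \<forall>A\<in>set P. is_interval r A}"

definition is_linear :: "'a set \<Rightarrow> 'a set list \<Rightarrow> bool" where
  "is_linear C P \<longleftrightarrow> con C P \<noteq> {}"

definition axis_rule :: "('a set \<Rightarrow> 'a set list \<Rightarrow> 'a rel set) \<Rightarrow> bool" where
  "axis_rule f \<longleftrightarrow> (\<forall>C P. finite C \<and> is_profile C P \<longrightarrow>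
      f C P \<noteq> {} \<and> f C P \<subseteq> axes C \<and> (\<forall>r\<in>f C P. r\<inverse> \<in> f C P))"

definition scoring_rule :: "('a set \<Rightarrow> 'a set list \<Rightarrow> 'a rel set) \<Rightarrow> bool" where
  "scoring_rule f \<longleftrightarrow> (\<exists>cost :: 'a set \<Rightarrow> 'a set \<Rightarrow> 'a rel \<Rightarrow> real.
      (\<forall>C. finite C \<longrightarrow> (\<forall>A r. A \<noteq> {} \<and> A \<subseteq> C \<and> r \<in> axes C \<longrightarrow> cost C A r \<ge> 0)) \<and>
      (\<forall>C P. finite C \<and> is_profile C P \<longrightarrow>
         f C P = {r \<in> axes C. \<forall>r'\<in>axes C.
                    (\<Sum>A\<leftarrow>P. cost C A r) \<le> (\<Sum>A\<leftarrow>P. cost C A r')}))"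

definition rename_axis :: "('a \<Rightarrow> 'a) \<Rightarrow> 'a rel \<Rightarrow> 'a rel" where
  "rename_axis \<pi> r = map_prod \<pi> \<pi> ` r"

definition rename_profile :: "('a \<Rightarrow> 'a) \<Rightarrow> 'a set list \<Rightarrow> 'a set list" where
  "rename_profile \<pi> P = map (\<lambda>A. \<pi> ` A) P"

definition neutral :: "('a set \<Rightarrow> 'a set list \<Rightarrow> 'a rel set) \<Rightarrow> bool" where
  "neutral f \<longleftrightarrow> (\<forall>C C' P \<pi>. finite C \<and> is_profile C P \<and> bij_betw \<pi> C C' \<longrightarrow>
      f C' (rename_profile \<pi> P) = rename_axis \<pi> ` f C P)"

definition consistent_with_linearity :: "('a set \<Rightarrow> 'a set list \<Rightarrow> 'a rel set) \<Rightarrow> bool" where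
  "consistent_with_linearity f \<longleftrightarrow> (\<forall>C P. finite C \<and> is_profile C P \<and> is_linear C P \<longrightarrow>
      f C P = con C P)"

definition clones :: "'a set \<Rightarrow> 'a set list \<Rightarrow> 'a \<Rightarrow> 'a \<Rightarrow> bool" where
  "clones C P a a' \<longleftrightarrow> a \<in> C \<and> a' \<in> C \<and> a \<noteq> a' \<and> (\<forall>A\<in>set P. a \<in> A \<longleftrightarrow> a' \<in> A)"

definition clone_proximity :: "('a set \<Rightarrow> 'a set list \<Rightarrow> 'a rel set) \<Rightarrow> bool" where
  "clone_proximity f \<longleftrightarrow> (\<forall>C P a a'. finite C \<and> is_profile C P \<and> clones C P a a' \<longrightarrow>
      (\<forall>r\<in>f C P. \<forall>x. ((a, x) \<in> r \<and> (x, a') \<in> r) \<or> ((a', x) \<in> r \<and> (x, a) \<in> r) \<longrightarrow>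
         (\<forall>A\<in>set P. a \<in> A \<and> a' \<in> A \<longrightarrow> x \<in> A)))"

definition remove_cand :: "'a \<Rightarrow> 'a set list \<Rightarrow> 'a set list" where
  "remove_cand c P = filter (\<lambda>A. A \<noteq> {}) (map (\<lambda>A. A - {c}) P)"

definition restrict_axis :: "'a \<Rightarrow> 'a rel \<Rightarrow> 'a rel" where
  "restrict_axis c r = {(x, y) \<in> r. x \<noteq> c \<and> y \<noteq> c}"

definition resistant_to_cloning :: "('a set \<Rightarrow> 'a set list \<Rightarrow> 'a rel set) \<Rightarrow> bool" where
  "resistant_to_cloning f \<longleftrightarrow> (\<forall>C P a a'. finite C \<and> is_profile C P \<and> clones C P a a' \<longrightarrow>
      (\<forall>r\<in>f C P. restrict_axis a r \<in> f (C - {a}) (remove_cand a P)) \<and>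
      (\<forall>r'\<in>f (C - {a}) (remove_cand a P). \<exists>r\<in>f C P. restrict_axis a r = r'))"

end

theory Submission
  imports Defs "HOL-Combinatorics.Permutations"
begin


fun ax :: "'a list \<Rightarrow> 'a rel" where
  "ax [] = {}"
| "ax (a # xs) = Pair a ` set xs \<union> ax xs"

lemma ax_sub: "ax xs \<subseteq> set xs \<times> set xs"
  by (induction xs) auto

lemma ax_append: "ax (xs @ ys) = ax xs \<union> ax ys \<union> set xs \<times> set ys"
  by (induction xs) auto

lemma ax_rev: "ax (rev xs) = (ax xs)\<inverse>"
  by (induction xs) (auto simp: ax_append)

lemma ax_map: "ax (map g xs) = map_prod g g ` ax xs"
  by (induction xs) (auto simp: image_image image_Un)

lemma ax_removeAll: "ax (removeAll c xs) = {(x,y) \<in> ax xs. x \<noteq> c \<and> y \<noteq> c}"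
  by (induction xs) auto

lemma restrict_ax: "restrict_axis c (ax xs) = ax (removeAll c xs)"
  by (simp add: restrict_axis_def ax_removeAll)

lemma ax_irrefl: "distinct xs \<Longrightarrow> (x,x) \<notin> ax xs"
  by (induction xs) (auto dest: set_mp[OF ax_sub])

lemma ax_trans: "distinct xs \<Longrightarrow> (x,y) \<in> ax xs \<Longrightarrow> (y,z) \<in> ax xs \<Longrightarrow> (x,z) \<in> ax xs"
  by (induction xs) (auto dest: set_mp[OF ax_sub])

lemma ax_total: "x \<in> set xs \<Longrightarrow> y \<in> set xs \<Longrightarrow> x \<noteq> y \<Longrightarrow> (x,y) \<in> ax xs \<or> (y,x) \<in> ax xs"
  by (induction xs) auto

lemma ax_axis: "distinct xs \<Longrightarrow> ax xs \<in> axes (set xs)"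
proof -
  assume d: "distinct xs"
  have "trans (ax xs)" using ax_trans[OF d] by (auto intro: transI)
  moreover have "irrefl (ax xs)" using ax_irrefl[OF d] by (auto simp: irrefl_on_def)
  moreover have "total_on (set xs) (ax xs)" using ax_total[of _ xs] by (auto simp: total_on_def)
  ultimately show ?thesis using ax_sub[of xs]
    unfolding axes_def is_axis_def strict_linear_order_on_def by blast
qed

lemma ax_asym: "distinct xs \<Longrightarrow> (x,y) \<in> ax xs \<Longrightarrow> (y,x) \<notin> ax xs"
  using ax_trans[of xs x y x] ax_irrefl[of xs x] by blast

lemma ax_inj: "distinct xs \<Longrightarrow> distinct ys \<Longrightarrow> set xs = set ys \<Longrightarrow> ax xs = ax ys \<Longrightarrow> xs = ys"
proof (induction xs arbitrary: ys)
  case Nil then show ?case by simp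
next
  case (Cons a xs)
  have "ys \<noteq> []" using Cons.prems(3) by auto
  then obtain b ys' where ys: "ys = b # ys'" by (cases ys) auto
  have dys: "distinct (b # ys')" using Cons.prems(2) ys by simp
  have ab: "a = b"
  proof (rule ccontr)
    assume ab: "a \<noteq> b"
    have "b \<in> set (a # xs)" by (metis Cons.prems(3) ys list.set_intros(1))
    hence "b \<in> set xs" using ab by simp
    hence "(a,b) \<in> ax (a # xs)" by simp
    hence 1: "(a,b) \<in> ax ys" by (simp only: Cons.prems(4))
    have "a \<in> set ys" by (metis Cons.prems(3) list.set_intros(1))
    hence "a \<in> set ys'" using ys ab by simp
    hence 2: "(b,a) \<in> ax ys" using ys by simp
    show False using ax_asym[OF Cons.prems(2) 1] 2 by simp
  qed
  have ra: "removeAll a (a # xs) = xs" using Cons.prems(1) by simp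
  have rb: "removeAll a ys = ys'" using dys ys ab by simp
  have "ax xs = ax ys'"
    using arg_cong[OF Cons.prems(4), of "\<lambda>r. {(x,y)\<in>r. x \<noteq> a \<and> y \<noteq> a}"]
    unfolding ax_removeAll[symmetric] ra rb .
  moreover have "set xs = set ys'"
  proof -
    have "set xs = set (a # xs) - {a}" using Cons.prems(1) by auto
    also have "\<dots> = set ys - {a}" by (simp only: Cons.prems(3))
    also have "\<dots> = set ys'" using dys ys ab by auto
    finally show ?thesis .
  qed
  ultimately have "xs = ys'" using Cons.IH Cons.prems(1) dys by simp
  thus ?case using ys ab by simp
qed

lemma finite_min_ex:
  assumes "finite C" "C \<noteq> {}" "trans r" "irrefl r"
  shows "\<exists>m\<in>C. \<forall>y\<in>C. (y,m) \<notin> r"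
  using assms
proof (induction C rule: finite_ne_induct)
  case (singleton x) then show ?case by (auto simp: irrefl_def)
next
  case (insert x F)
  then obtain m where m: "m \<in> F" "\<forall>y\<in>F. (y,m) \<notin> r" by auto
  show ?case
  proof (cases "(x,m) \<in> r")
    case True
    have "\<forall>y\<in>insert x F. (y,x) \<notin> r"
      using True m insert.prems unfolding trans_def irrefl_def by blast
    then show ?thesis by auto
  next
    case False then show ?thesis using m by auto
  qed
qed

lemma axis_ex_list:
  assumes "finite C" "r \<in> axes C"
  shows "\<exists>xs. distinct xs \<and> set xs = C \<and> ax xs = r"
  using assms
proof (induction "card C" arbitrary: C r)
  case 0
  then have "C = {}" by simp
  with 0 have "r = {}" by (auto simp: axes_def is_axis_def)
  then show ?case using \<open>C = {}\<close> by (intro exI[of _ "[]"]) simp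
next
  case (Suc n)
  have ax: "strict_linear_order_on C r" "r \<subseteq> C \<times> C" using Suc.prems by (auto simp: axes_def is_axis_def)
  have ne: "C \<noteq> {}" using Suc.hyps by auto
  obtain m where m: "m \<in> C" "\<forall>y\<in>C. (y,m) \<notin> r"
    using finite_min_ex[OF Suc.prems(1) ne, of r] ax by (auto simp: strict_linear_order_on_def)
  define r' where "r' = {(x,y)\<in>r. x \<noteq> m \<and> y \<noteq> m}"
  have "r' \<in> axes (C - {m})"
  proof -
    have t: "trans r" and i: "irrefl r" and to: "total_on C r"
      using ax(1) by (auto simp: strict_linear_order_on_def)
    have "trans r'" unfolding r'_def
      by (rule transI) (use t in \<open>auto dest: transD\<close>)
    moreover have "irrefl r'" using i unfolding r'_def irrefl_on_def by auto
    moreover have "total_on (C - {m}) r'" using to unfolding r'_def total_on_def by auto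
    moreover have "r' \<subseteq> (C - {m}) \<times> (C - {m})" using ax(2) unfolding r'_def by auto
    ultimately show ?thesis unfolding axes_def is_axis_def strict_linear_order_on_def by blast
  qed
  moreover have "n = card (C - {m})" using Suc.hyps m Suc.prems by simp
  ultimately obtain ys where ys: "distinct ys" "set ys = C - {m}" "ax ys = r'"
    using Suc.hyps(1)[of "C - {m}" r'] Suc.prems by auto
  have "ax (m # ys) = r"
  proof -
    have "Pair m ` set ys \<subseteq> r"
    proof
      fix p assume "p \<in> Pair m ` set ys"
      then obtain y where y: "p = (m,y)" "y \<in> C" "y \<noteq> m" using ys by auto
      with ax m show "p \<in> r" unfolding strict_linear_order_on_def total_on_def by blast
    qed
    moreover have "r \<subseteq> Pair m ` set ys \<union> r'"
      using ax m ys unfolding r'_def by auto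
    ultimately show ?thesis using ys unfolding r'_def by auto
  qed
  then show ?case using ys m by (intro exI[of _ "m # ys"]) auto
qed

lemma removeAll_insert:
  assumes "distinct xs" "c \<in> set xs" "removeAll c xs = L"
  shows "\<exists>i\<le>length L. xs = take i L @ c # drop i L"
proof -
  obtain us vs where xs: "xs = us @ c # vs" using split_list[OF assms(2)] by auto
  have "c \<notin> set us" "c \<notin> set vs" using assms(1) xs by auto
  hence "L = us @ vs" using assms(3) xs by simp
  thus ?thesis using xs by (intro exI[of _ "length us"]) auto
qed




definition symc :: "('a set \<Rightarrow> 'a set \<Rightarrow> 'a rel \<Rightarrow> real) \<Rightarrow> 'a set \<Rightarrow> 'a set \<Rightarrow> 'a rel \<Rightarrow> real" where
  "symc cost C A r = (\<Sum>\<pi>\<in>{\<pi>. \<pi> permutes C}. cost C (\<pi> ` A) (rename_axis \<pi> r) + cost C (\<pi> ` A) ((rename_axis \<pi> r)\<inverse>))"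

lemma rename_conv: "rename_axis \<pi> (r\<inverse>) = (rename_axis \<pi> r)\<inverse>"
  unfolding rename_axis_def by auto

lemma rename_ax: "rename_axis \<pi> (ax xs) = ax (map \<pi> xs)"
  unfolding rename_axis_def by (simp add: ax_map)

lemma rename_comp: "rename_axis \<pi> (rename_axis \<sigma> r) = rename_axis (\<pi> \<circ> \<sigma>) r"
  unfolding rename_axis_def by (auto simp: image_image map_prod.comp[symmetric])

lemma axes_rename:
  assumes "finite C" "\<pi> permutes C" "r \<in> axes C"
  shows "rename_axis \<pi> r \<in> axes C"
proof -
  obtain xs where xs: "distinct xs" "set xs = C" "ax xs = r" using axis_ex_list[OF assms(1,3)] by blast
  have "distinct (map \<pi> xs)" using xs(1) permutes_inj[OF assms(2)] by (simp add: distinct_map inj_on_subset[of \<pi> UNIV])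
  moreover have "set (map \<pi> xs) = C" using xs(2) permutes_image[OF assms(2)] by simp
  ultimately show ?thesis using ax_axis[of "map \<pi> xs"] xs(3) by (simp add: rename_ax[symmetric])
qed

lemma axes_conv:
  assumes "finite C" "r \<in> axes C"
  shows "r\<inverse> \<in> axes C"
proof -
  obtain xs where xs: "distinct xs" "set xs = C" "ax xs = r" using axis_ex_list[OF assms] by blast
  show ?thesis using ax_axis[of "rev xs"] xs by (simp add: ax_rev)
qed

lemma rename_inj: "inj \<pi> \<Longrightarrow> inj (rename_axis \<pi>)"
proof -
  assume i: "inj \<pi>"
  have m: "inj (map_prod \<pi> \<pi>)" using map_prod_inj_on[OF i i] by simp
  show ?thesis unfolding rename_axis_def by (rule injI) (simp add: inj_image_eq_iff[OF m])
qed

lemma profile_rename: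
  assumes "is_profile C P" "\<pi> permutes C"
  shows "is_profile C (rename_profile \<pi> P)"
  unfolding is_profile_def rename_profile_def
proof
  fix A assume "A \<in> set (map (image \<pi>) P)"
  then obtain B where B: "B \<in> set P" "A = \<pi> ` B" by auto
  have "B \<noteq> {}" "B \<subseteq> C" using assms(1) B(1) unfolding is_profile_def by auto
  moreover have "\<pi> ` C = C" using permutes_image[OF assms(2)] .
  ultimately show "A \<noteq> {} \<and> A \<subseteq> C" using B(2) by blast
qed

lemma sum_rename_profile: "(\<Sum>A\<leftarrow>rename_profile \<pi> P. g A) = (\<Sum>A\<leftarrow>P. g (\<pi> ` A))"
  unfolding rename_profile_def by (simp add: o_def)

lemma sum_list_sum_swap: "(\<Sum>A\<leftarrow>P. \<Sum>\<pi>\<in>X. g A \<pi>) = (\<Sum>\<pi>\<in>X. \<Sum>A\<leftarrow>P. g A \<pi>)"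
  by (induction P) (auto simp: sum.distrib)

lemma argmin_le: "F = {r\<in>X. \<forall>r'\<in>X. g r \<le> g r'} \<Longrightarrow> r \<in> F \<Longrightarrow> r' \<in> X \<Longrightarrow> g r \<le> g r'"
  by auto

lemma argmin_lt: "F = {r\<in>X. \<forall>r'\<in>X. (g r :: real) \<le> g r'} \<Longrightarrow> r \<in> F \<Longrightarrow> r' \<in> X \<Longrightarrow> r' \<notin> F \<Longrightarrow> g r < g r'"
  by force

lemma argmin_I: "F = {r\<in>X. \<forall>r'\<in>X. g r \<le> g r'} \<Longrightarrow> r \<in> X \<Longrightarrow> (\<And>r'. r' \<in> X \<Longrightarrow> g r \<le> g r') \<Longrightarrow> r \<in> F"
  by auto

locale AR =
  fixes f :: "'a set \<Rightarrow> 'a set list \<Rightarrow> 'a rel set"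
    and cost :: "'a set \<Rightarrow> 'a set \<Rightarrow> 'a rel \<Rightarrow> real"
  assumes rule: "axis_rule f"
    and neu: "neutral f"
    and cwl: "consistent_with_linearity f"
    and res: "resistant_to_cloning f"
    and prox: "clone_proximity f"
    and rep: "\<And>C P. finite C \<Longrightarrow> is_profile C P \<Longrightarrow>
       f C P = {r \<in> axes C. \<forall>r'\<in>axes C. (\<Sum>A\<leftarrow>P. cost C A r) \<le> (\<Sum>A\<leftarrow>P. cost C A r')}"
begin

lemma f_sub: "finite C \<Longrightarrow> is_profile C P \<Longrightarrow> f C P \<subseteq> axes C"
  using rule unfolding axis_rule_def by blast

lemma f_ne: "finite C \<Longrightarrow> is_profile C P \<Longrightarrow> f C P \<noteq> {}"
  using rule unfolding axis_rule_def by blast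

lemma f_conv: "finite C \<Longrightarrow> is_profile C P \<Longrightarrow> r \<in> f C P \<Longrightarrow> r\<inverse> \<in> f C P"
  using rule unfolding axis_rule_def by blast

lemma f_conv_iff: "finite C \<Longrightarrow> is_profile C P \<Longrightarrow> r\<inverse> \<in> f C P \<longleftrightarrow> r \<in> f C P"
  using f_conv[of C P r] f_conv[of C P "r\<inverse>"] by auto

lemma f_rename: "finite C \<Longrightarrow> is_profile C P \<Longrightarrow> \<pi> permutes C \<Longrightarrow>
    f C (rename_profile \<pi> P) = rename_axis \<pi> ` f C P"
  using neu permutes_imp_bij unfolding neutral_def by blast

lemma f_rename_iff: "finite C \<Longrightarrow> is_profile C P \<Longrightarrow> \<pi> permutes C \<Longrightarrow>
    rename_axis \<pi> r \<in> f C (rename_profile \<pi> P) \<longleftrightarrow> r \<in> f C P"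
  using f_rename[of C P \<pi>] rename_inj[OF permutes_inj[of \<pi> C]] by (simp add: inj_image_mem_iff)

lemma sym_rep:
  assumes C: "finite C" and P: "is_profile C P"
  shows "f C P = {r \<in> axes C. \<forall>r'\<in>axes C. (\<Sum>A\<leftarrow>P. symc cost C A r) \<le> (\<Sum>A\<leftarrow>P. symc cost C A r')}"
proof -
  define PP where "PP = {\<pi>. \<pi> permutes C}"
  define S where "S Q r = (\<Sum>A\<leftarrow>Q. cost C A r)" for Q r
  define T where "T \<pi> r = S (rename_profile \<pi> P) (rename_axis \<pi> r) + S (rename_profile \<pi> P) ((rename_axis \<pi> r)\<inverse>)" for \<pi> r
  have fin: "finite PP" unfolding PP_def using finite_permutations[OF C] .
  have idin: "id \<in> PP" unfolding PP_def by simp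
  have SS: "(\<Sum>A\<leftarrow>P. symc cost C A r) = (\<Sum>\<pi>\<in>PP. T \<pi> r)" for r
    unfolding symc_def T_def S_def PP_def sum_list_sum_swap sum_rename_profile
    by (simp add: sum_list_addf)
  have repS: "f C (rename_profile \<pi> P) = {r \<in> axes C. \<forall>r'\<in>axes C. S (rename_profile \<pi> P) r \<le> S (rename_profile \<pi> P) r'}"
    if "\<pi> \<in> PP" for \<pi>
    unfolding S_def using rep[OF C profile_rename[OF P]] that unfolding PP_def by blast
  have le: "T \<pi> r \<le> T \<pi> r'" if "\<pi> \<in> PP" "r \<in> f C P" "r' \<in> axes C" for \<pi> r r'
  proof -
    have pc: "\<pi> permutes C" using that unfolding PP_def by simp
    have a: "rename_axis \<pi> r \<in> f C (rename_profile \<pi> P)" using f_rename_iff[OF C P pc] that by simp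
    have b: "(rename_axis \<pi> r)\<inverse> \<in> f C (rename_profile \<pi> P)" using f_conv[OF C profile_rename[OF P pc] a] .
    have c: "rename_axis \<pi> r' \<in> axes C" using axes_rename[OF C pc that(3)] .
    have d: "(rename_axis \<pi> r')\<inverse> \<in> axes C" using axes_conv[OF C c] .
    show ?thesis unfolding T_def
      using argmin_le[OF repS[OF that(1)] a c] argmin_le[OF repS[OF that(1)] b d] by linarith
  qed
  have lt: "T \<pi> r0 < T \<pi> r" if "\<pi> \<in> PP" "r0 \<in> f C P" "r \<in> axes C" "r \<notin> f C P" for \<pi> r r0
  proof -
    have pc: "\<pi> permutes C" using that unfolding PP_def by simp
    have P': "is_profile C (rename_profile \<pi> P)" using profile_rename[OF P pc] .
    have a: "rename_axis \<pi> r0 \<in> f C (rename_profile \<pi> P)" using f_rename_iff[OF C P pc] that by simp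
    have b: "(rename_axis \<pi> r0)\<inverse> \<in> f C (rename_profile \<pi> P)" using f_conv[OF C P' a] .
    have c: "rename_axis \<pi> r \<in> axes C" using axes_rename[OF C pc that(3)] .
    have d: "(rename_axis \<pi> r)\<inverse> \<in> axes C" using axes_conv[OF C c] .
    have e: "rename_axis \<pi> r \<notin> f C (rename_profile \<pi> P)" using f_rename_iff[OF C P pc] that by simp
    have g: "(rename_axis \<pi> r)\<inverse> \<notin> f C (rename_profile \<pi> P)" using e f_conv_iff[OF C P'] by simp
    show ?thesis unfolding T_def
      using argmin_lt[OF repS[OF that(1)] a c e] argmin_lt[OF repS[OF that(1)] b d g] by linarith
  qed
  show ?thesis
  proof (rule set_eqI, rule iffI)
    fix r assume r: "r \<in> f C P"
    have "r \<in> axes C" using f_sub[OF C P] r by blast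
    moreover have "(\<Sum>\<pi>\<in>PP. T \<pi> r) \<le> (\<Sum>\<pi>\<in>PP. T \<pi> r')" if "r' \<in> axes C" for r'
      by (rule sum_mono) (use le r that in blast)
    ultimately show "r \<in> {r \<in> axes C. \<forall>r'\<in>axes C. (\<Sum>A\<leftarrow>P. symc cost C A r) \<le> (\<Sum>A\<leftarrow>P. symc cost C A r')}"
      unfolding SS by blast
  next
    fix r assume r: "r \<in> {r \<in> axes C. \<forall>r'\<in>axes C. (\<Sum>A\<leftarrow>P. symc cost C A r) \<le> (\<Sum>A\<leftarrow>P. symc cost C A r')}"
    show "r \<in> f C P"
    proof (rule ccontr)
      assume nr: "r \<notin> f C P"
      obtain r0 where r0: "r0 \<in> f C P" using f_ne[OF C P] by blast
      have r0a: "r0 \<in> axes C" using f_sub[OF C P] r0 by blast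
      have "(\<Sum>\<pi>\<in>PP. T \<pi> r0) < (\<Sum>\<pi>\<in>PP. T \<pi> r)"
        by (rule sum_strict_mono) (use fin idin lt r0 r nr in auto)
      moreover have "(\<Sum>\<pi>\<in>PP. T \<pi> r) \<le> (\<Sum>\<pi>\<in>PP. T \<pi> r0)" using r r0a unfolding SS by blast
      ultimately show False by linarith
    qed
  qed
qed

end

lemma symc_conv: "symc cost C A (r\<inverse>) = symc cost C A r"
  unfolding symc_def rename_conv by (simp add: add.commute)

lemma symc_rename:
  assumes "\<sigma> permutes C"
  shows "symc cost C (\<sigma> ` A) (rename_axis \<sigma> r) = symc cost C A r"
proof -
  let ?g = "\<lambda>\<pi>. cost C (\<pi> ` A) (rename_axis \<pi> r) + cost C (\<pi> ` A) ((rename_axis \<pi> r)\<inverse>)"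
  have "symc cost C (\<sigma> ` A) (rename_axis \<sigma> r) = (\<Sum>\<pi>\<in>{\<pi>. \<pi> permutes C}. ?g (\<pi> \<circ> \<sigma>))"
    unfolding symc_def rename_comp by (simp add: image_comp)
  also have "\<dots> = (\<Sum>\<pi>\<in>{\<pi>. \<pi> permutes C}. ?g \<pi>)"
  proof (rule sum.reindex_bij_witness[where i="\<lambda>\<pi>. \<pi> \<circ> inv \<sigma>" and j="\<lambda>\<pi>. \<pi> \<circ> \<sigma>"])
    fix \<pi> assume "\<pi> \<in> {\<pi>. \<pi> permutes C}"
    thus "\<pi> \<circ> \<sigma> \<circ> inv \<sigma> = \<pi>" "\<pi> \<circ> \<sigma> \<in> {\<pi>. \<pi> permutes C}"
      using permutes_inv_o[OF assms] permutes_compose[OF assms] by (auto simp: o_assoc[symmetric])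
    show "?g (\<pi> \<circ> \<sigma>) = ?g (\<pi> \<circ> \<sigma>)" ..
  next
    fix \<pi> assume "\<pi> \<in> {\<pi>. \<pi> permutes C}"
    thus "\<pi> \<circ> inv \<sigma> \<circ> \<sigma> = \<pi>" "\<pi> \<circ> inv \<sigma> \<in> {\<pi>. \<pi> permutes C}"
      using permutes_inv_o[OF assms] permutes_compose[OF permutes_inv[OF assms]] by (auto simp: o_assoc[symmetric])
  qed
  also have "\<dots> = symc cost C A r" unfolding symc_def ..
  finally show ?thesis .
qed




lemma symc_shape:
  assumes dx: "distinct xs" and dy: "distinct ys" and sx: "set xs = C" and sy: "set ys = C"
    and AC: "A \<subseteq> C" and BC: "B \<subseteq> C"
    and m: "map (\<lambda>x. x \<in> A) xs = map (\<lambda>x. x \<in> B) ys"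
  shows "symc cost C A (ax xs) = symc cost C B (ax ys)"
proof -
  have len: "length xs = length ys" using arg_cong[OF m, of length] by simp
  define \<sigma> where "\<sigma> x = (case map_of (zip xs ys) x of None \<Rightarrow> x | Some y \<Rightarrow> y)" for x
  have nth: "\<sigma> (xs ! i) = ys ! i" if "i < length xs" for i
    unfolding \<sigma>_def using map_of_zip_nth[OF len dx] that len by simp
  have mx: "map \<sigma> xs = ys" by (rule nth_equalityI) (use len nth in auto)
  have out: "\<sigma> x = x" if "x \<notin> C" for x
  proof -
    have "fst ` set (zip xs ys) = set xs" using len by (metis map_fst_zip set_map)
    hence "map_of (zip xs ys) x = None" using that sx by (simp add: map_of_eq_None_iff)
    thus ?thesis unfolding \<sigma>_def by simp
  qed
  have inj: "inj_on \<sigma> C" using dy mx sx by (metis distinct_map)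
  have img: "\<sigma> ` C = C" using mx sx sy by (metis set_map)
  have perm: "\<sigma> permutes C"
    by (rule bij_imp_permutes) (use inj img out in \<open>auto simp: bij_betw_def\<close>)
  have AB: "\<sigma> ` A = B"
  proof (rule set_eqI, rule iffI)
    fix y assume "y \<in> \<sigma> ` A"
    then obtain x where x: "x \<in> A" "y = \<sigma> x" by auto
    then obtain i where i: "i < length xs" "xs ! i = x" using AC sx by (metis in_set_conv_nth subsetD)
    have "(xs ! i \<in> A) = (ys ! i \<in> B)" using arg_cong[OF m, of "\<lambda>l. l ! i"] i len by simp
    thus "y \<in> B" using x i nth[OF i(1)] by simp
  next
    fix y assume y: "y \<in> B"
    then obtain i where i: "i < length ys" "ys ! i = y" using BC sy by (metis in_set_conv_nth subsetD)
    have "(xs ! i \<in> A) = (ys ! i \<in> B)" using arg_cong[OF m, of "\<lambda>l. l ! i"] i len by simp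
    hence "xs ! i \<in> A" using y i by simp
    thus "y \<in> \<sigma> ` A" using nth i len by (metis image_eqI)
  qed
  have "symc cost C B (ax ys) = symc cost C (\<sigma> ` A) (rename_axis \<sigma> (ax xs))"
    using AB mx by (simp add: rename_ax)
  also have "\<dots> = symc cost C A (ax xs)" by (rule symc_rename[OF perm])
  finally show ?thesis by simp
qed

definition shp :: "('a set \<Rightarrow> 'a set \<Rightarrow> 'a rel \<Rightarrow> real) \<Rightarrow> 'a set \<Rightarrow> 'a list \<Rightarrow> bool list \<Rightarrow> real" where
  "shp cost C L bs = symc cost C {L ! i | i. i < length L \<and> bs ! i} (ax L)"

lemma symc_shp:
  assumes dx: "distinct xs" and dL: "distinct L" and len: "length xs = length L"
    and sub: "set xs \<subseteq> C" and sL: "set L = C" and AC: "A \<subseteq> C"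
  shows "symc cost C A (ax xs) = shp cost C L (map (\<lambda>x. x \<in> A) xs)"
proof -
  have sx: "set xs = C"
    using card_subset_eq[of C "set xs"] sub sL dx dL len by (metis List.finite_set distinct_card)
  define bs where "bs = map (\<lambda>x. x \<in> A) xs"
  define B where "B = {L ! i | i. i < length L \<and> bs ! i}"
  have BC: "B \<subseteq> C" unfolding B_def using sL by auto
  have "map (\<lambda>x. x \<in> B) L = bs"
  proof (rule nth_equalityI)
    show "length (map (\<lambda>x. x \<in> B) L) = length bs" using len unfolding bs_def by simp
    fix i assume i: "i < length (map (\<lambda>x. x \<in> B) L)"
    have "(L ! i \<in> B) = bs ! i"
      unfolding B_def using i dL by (auto simp: nth_eq_iff_index_eq)
    thus "map (\<lambda>x. x \<in> B) L ! i = bs ! i" using i by simp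
  qed
  hence "symc cost C A (ax xs) = symc cost C B (ax L)"
    using symc_shape[OF dx dL sx sL AC BC] unfolding bs_def by simp
  thus ?thesis unfolding shp_def B_def bs_def by simp
qed

lemma shp_rev:
  assumes dL: "distinct L" and sL: "set L = C" and len: "length bs = length L"
  shows "shp cost C L (rev bs) = shp cost C L bs"
proof -
  define A where "A = {L ! i | i. i < length L \<and> bs ! i}"
  have AC: "A \<subseteq> C" unfolding A_def using sL by auto
  have m: "map (\<lambda>x. x \<in> A) L = bs"
  proof (rule nth_equalityI)
    show "length (map (\<lambda>x. x \<in> A) L) = length bs" using len by simp
    fix i assume i: "i < length (map (\<lambda>x. x \<in> A) L)"
    have "(L ! i \<in> A) = bs ! i" unfolding A_def using i dL by (auto simp: nth_eq_iff_index_eq)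
    thus "map (\<lambda>x. x \<in> A) L ! i = bs ! i" using i by simp
  qed
  have "symc cost C A (ax (rev L)) = shp cost C L (rev bs)"
    using symc_shp[of "rev L" L C A cost] dL sL AC m by (simp add: rev_map[symmetric])
  moreover have "symc cost C A (ax L) = shp cost C L bs"
    using symc_shp[of L L C A cost] dL sL AC m by simp
  moreover have "symc cost C A (ax (rev L)) = symc cost C A (ax L)"
    by (simp add: ax_rev symc_conv)
  ultimately show ?thesis by simp
qed

context AR begin

lemma int_cmp:
  assumes C: "finite C" and A: "A \<noteq> {}" "A \<subseteq> C" and r1: "r1 \<in> axes C" and r2: "r2 \<in> axes C"
    and i1: "is_interval r1 A"
  shows "is_interval r2 A \<Longrightarrow> symc cost C A r1 = symc cost C A r2"
    and "\<not> is_interval r2 A \<Longrightarrow> symc cost C A r1 < symc cost C A r2"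
proof -
  have P: "is_profile C [A]" using A by (simp add: is_profile_def)
  have c1: "r1 \<in> con C [A]" using r1 i1 by (simp add: con_def)
  hence lin: "is_linear C [A]" by (auto simp: is_linear_def)
  have fc: "f C [A] = con C [A]" using cwl C P lin unfolding consistent_with_linearity_def by blast
  note R = sym_rep[OF C P]
  have f1: "r1 \<in> f C [A]" using fc c1 by simp
  {
    assume "is_interval r2 A"
    hence "r2 \<in> f C [A]" using fc r2 by (simp add: con_def)
    thus "symc cost C A r1 = symc cost C A r2"
      using argmin_le[OF R f1 r2] argmin_le[OF R _ r1] by fastforce
  }
  {
    assume "\<not> is_interval r2 A"
    hence "r2 \<notin> f C [A]" using fc by (simp add: con_def)
    thus "symc cost C A r1 < symc cost C A r2"
      using argmin_lt[OF R f1 r2] by simp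
  }
qed

lemma prox_viol:
  assumes "finite C" "is_profile C P" "clones C P a a'" "r \<in> f C P"
    "((a,x)\<in>r \<and> (x,a')\<in>r) \<or> ((a',x)\<in>r \<and> (x,a)\<in>r)" "A \<in> set P" "a \<in> A" "a' \<in> A" "x \<notin> A"
  shows False
  using prox assms unfolding clone_proximity_def by blast

lemma res1:
  assumes "finite C" "is_profile C P" "clones C P a a'" "r \<in> f C P"
  shows "restrict_axis a r \<in> f (C - {a}) (remove_cand a P)"
  using res assms unfolding resistant_to_cloning_def by blast

lemma res2:
  assumes "finite C" "is_profile C P" "clones C P a a'" "r' \<in> f (C - {a}) (remove_cand a P)"
  shows "\<exists>r\<in>f C P. restrict_axis a r = r'"
  using res assms unfolding resistant_to_cloning_def by blast

end




locale AR5 = AR f cost for f :: "'a set \<Rightarrow> 'a set list \<Rightarrow> 'a rel set" and cost +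
  fixes c0 c1 c2 c3 c4 :: 'a
  assumes dst: "distinct [c0,c1,c2,c3,c4]"
begin

lemma neq[simp]: "c0 \<noteq> c1" "c0 \<noteq> c2" "c0 \<noteq> c3" "c0 \<noteq> c4" "c1 \<noteq> c2" "c1 \<noteq> c3" "c1 \<noteq> c4"
  "c2 \<noteq> c3" "c2 \<noteq> c4" "c3 \<noteq> c4"
  "c1 \<noteq> c0" "c2 \<noteq> c0" "c3 \<noteq> c0" "c4 \<noteq> c0" "c2 \<noteq> c1" "c3 \<noteq> c1" "c4 \<noteq> c1"
  "c3 \<noteq> c2" "c4 \<noteq> c2" "c4 \<noteq> c3"
  using dst by auto

definition "C5 = {c0,c1,c2,c3,c4}"
definition "C4 = {c0,c1,c2,c3}"
definition "L5 = [c0,c1,c2,c3,c4]"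
definition "L4 = [c0,c1,c2,c3]"
definition "h5 = shp cost C5 L5"
definition "h4 = shp cost C4 L4"

abbreviation sc :: "'a set \<Rightarrow> 'a set list \<Rightarrow> 'a rel \<Rightarrow> real" where
  "sc C P r \<equiv> (\<Sum>A\<leftarrow>P. symc cost C A r)"

lemma fin5: "finite C5" and fin4: "finite C4" by (auto simp: C5_def C4_def)
lemma C5_L: "set L5 = C5" and C4_L: "set L4 = C4" by (auto simp: C5_def L5_def C4_def L4_def)
lemma dL5: "distinct L5" and dL4: "distinct L4" by (auto simp: L5_def L4_def)
lemma C54: "C5 - {c4} = C4" by (auto simp: C5_def C4_def)

lemma s5: "distinct xs \<Longrightarrow> length xs = 5 \<Longrightarrow> set xs \<subseteq> C5 \<Longrightarrow> A \<subseteq> C5 \<Longrightarrow>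
   symc cost C5 A (ax xs) = h5 (map (\<lambda>x. x \<in> A) xs)"
  unfolding h5_def using symc_shp[of xs L5 C5 A cost] dL5 C5_L by (simp add: L5_def)

lemma s4: "distinct xs \<Longrightarrow> length xs = 4 \<Longrightarrow> set xs \<subseteq> C4 \<Longrightarrow> A \<subseteq> C4 \<Longrightarrow>
   symc cost C4 A (ax xs) = h4 (map (\<lambda>x. x \<in> A) xs)"
  unfolding h4_def using symc_shp[of xs L4 C4 A cost] dL4 C4_L by (simp add: L4_def)

lemma ax5: "distinct xs \<Longrightarrow> length xs = 5 \<Longrightarrow> set xs \<subseteq> C5 \<Longrightarrow> ax xs \<in> axes C5"
proof -
  assume a: "distinct xs" "length xs = 5" "set xs \<subseteq> C5"
  have "card C5 = 5" using dst by (simp add: C5_def)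
  hence "set xs = C5" using card_subset_eq[OF fin5 a(3)] a(1,2) by (simp add: distinct_card)
  thus ?thesis using ax_axis[OF a(1)] by simp
qed

lemma ax4: "distinct xs \<Longrightarrow> length xs = 4 \<Longrightarrow> set xs \<subseteq> C4 \<Longrightarrow> ax xs \<in> axes C4"
proof -
  assume a: "distinct xs" "length xs = 4" "set xs \<subseteq> C4"
  have "card C4 = 4" using dst by (simp add: C4_def)
  hence "set xs = C4" using card_subset_eq[OF fin4 a(3)] a(1,2) by (simp add: distinct_card)
  thus ?thesis using ax_axis[OF a(1)] by simp
qed

lemma h5r: "length bs = 5 \<Longrightarrow> h5 (rev bs) = h5 bs"
  unfolding h5_def using shp_rev[OF dL5 C5_L] by (simp add: L5_def)
lemma h4r: "length bs = 4 \<Longrightarrow> h4 (rev bs) = h4 bs"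
  unfolding h4_def using shp_rev[OF dL4 C4_L] by (simp add: L4_def)

lemma mem5: "c0 \<in> C5" "c1 \<in> C5" "c2 \<in> C5" "c3 \<in> C5" "c4 \<in> C5" by (auto simp: C5_def)
lemma mem4: "c0 \<in> C4" "c1 \<in> C4" "c2 \<in> C4" "c3 \<in> C4" by (auto simp: C4_def)

lemmas ev5 = s5 ax5 mem5
lemmas ev4 = s4 ax4 mem4

lemma h5_int:
  assumes A: "A \<noteq> {}" "A \<subseteq> C5" and xs: "distinct xs" "length xs = 5" "set xs \<subseteq> C5"
    and ys: "distinct ys" "length ys = 5" "set ys \<subseteq> C5" and i: "is_interval (ax xs) A"
  shows "is_interval (ax ys) A \<Longrightarrow> h5 (map (\<lambda>x. x \<in> A) xs) = h5 (map (\<lambda>x. x \<in> A) ys)"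
    and "\<not> is_interval (ax ys) A \<Longrightarrow> h5 (map (\<lambda>x. x \<in> A) xs) < h5 (map (\<lambda>x. x \<in> A) ys)"
  using int_cmp[OF fin5 A ax5[OF xs] ax5[OF ys] i] s5[OF xs A(2)] s5[OF ys A(2)] by auto

lemma h4_int:
  assumes A: "A \<noteq> {}" "A \<subseteq> C4" and xs: "distinct xs" "length xs = 4" "set xs \<subseteq> C4"
    and ys: "distinct ys" "length ys = 4" "set ys \<subseteq> C4" and i: "is_interval (ax xs) A"
  shows "is_interval (ax ys) A \<Longrightarrow> h4 (map (\<lambda>x. x \<in> A) xs) = h4 (map (\<lambda>x. x \<in> A) ys)"
    and "\<not> is_interval (ax ys) A \<Longrightarrow> h4 (map (\<lambda>x. x \<in> A) xs) < h4 (map (\<lambda>x. x \<in> A) ys)"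
  using int_cmp[OF fin4 A ax4[OF xs] ax4[OF ys] i] s4[OF xs A(2)] s4[OF ys A(2)] by auto

definition "perms4 = [[c0,c1,c2,c3],[c0,c1,c3,c2],[c0,c2,c1,c3],[c0,c2,c3,c1],[c0,c3,c1,c2],[c0,c3,c2,c1],
  [c1,c0,c2,c3],[c1,c0,c3,c2],[c1,c2,c0,c3],[c1,c2,c3,c0],[c1,c3,c0,c2],[c1,c3,c2,c0],
  [c2,c0,c1,c3],[c2,c0,c3,c1],[c2,c1,c0,c3],[c2,c1,c3,c0],[c2,c3,c0,c1],[c2,c3,c1,c0],
  [c3,c0,c1,c2],[c3,c0,c2,c1],[c3,c1,c0,c2],[c3,c1,c2,c0],[c3,c2,c0,c1],[c3,c2,c1,c0]]"

lemma perm4_enum: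
  assumes "distinct xs" "set xs = C4"
  shows "xs \<in> set perms4"
proof -
  have "card C4 = 4" using dst by (simp add: C4_def)
  hence "length xs = 4" using assms distinct_card by metis
  then obtain a b c d where xs: "xs = [a,b,c,d]"
    by (auto simp: numeral_eq_Suc length_Suc_conv)
  have "a \<in> C4" "b \<in> C4" "c \<in> C4" "d \<in> C4" using assms(2) xs by auto
  hence h: "a = c0 \<or> a = c1 \<or> a = c2 \<or> a = c3" "b = c0 \<or> b = c1 \<or> b = c2 \<or> b = c3"
    "c = c0 \<or> c = c1 \<or> c = c2 \<or> c = c3" "d = c0 \<or> d = c1 \<or> d = c2 \<or> d = c3"
    by (auto simp: C4_def)
  have dd: "distinct [a,b,c,d]" using assms(1) xs by simp
  show ?thesis unfolding xs using h dd
    by (elim disjE) (simp_all add: perms4_def)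
qed

lemma mem4_I:
  assumes P: "is_profile C4 P" and L: "distinct L" "length L = 4" "set L \<subseteq> C4"
    and le: "\<forall>xs\<in>set perms4. sc C4 P (ax L) \<le> sc C4 P (ax xs)"
  shows "ax L \<in> f C4 P"
proof (rule argmin_I[OF sym_rep[OF fin4 P]])
  show "ax L \<in> axes C4" using ax4[OF L] .
  fix r' assume r': "r' \<in> axes C4"
  obtain xs where xs: "distinct xs" "set xs = C4" "ax xs = r'" using axis_ex_list[OF fin4 r'] by blast
  show "sc C4 P (ax L) \<le> sc C4 P r'" using le perm4_enum[OF xs(1,2)] xs(3) by auto
qed

lemma ins5:
  assumes e: "e \<in> axes C5" and r: "restrict_axis c4 e = ax L" and L: "distinct L" "set L = C4"
  shows "\<exists>i\<le>4. e = ax (take i L @ c4 # drop i L)"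
proof -
  obtain xs where xs: "distinct xs" "set xs = C5" "ax xs = e" using axis_ex_list[OF fin5 e] by blast
  have "ax (removeAll c4 xs) = ax L" by (metis r xs(3) restrict_ax)
  moreover have "set (removeAll c4 xs) = set L" using xs(2) L(2) C54 by simp
  ultimately have rm: "removeAll c4 xs = L" using ax_inj[of "removeAll c4 xs" L] xs(1) L(1) by (simp add: distinct_removeAll)
  have c4: "c4 \<in> set xs" using xs(2) mem5 by simp
  have "card C4 = 4" using dst by (simp add: C4_def)
  hence "length L = 4" using L distinct_card by metis
  thus ?thesis using removeAll_insert[OF xs(1) c4 rm] xs(3) by metis
qed

lemma le4: "i \<le> (4::nat) \<Longrightarrow> i = 0 \<or> i = 1 \<or> i = 2 \<or> i = 3 \<or> i = 4" by arith

end



context AR5 begin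

lemma not_int: "a \<in> A \<Longrightarrow> b \<in> A \<Longrightarrow> c \<notin> A \<Longrightarrow> (a,c) \<in> r \<Longrightarrow> (c,b) \<in> r \<Longrightarrow> \<not> is_interval r A"
  unfolding is_interval_def by blast

definition "Q1 = [{c0,c1,c4},{c1,c2},{c1,c3}]"
definition "B1 = [{c0,c1},{c1,c2},{c1,c3}]"
lemma pQ1: "is_profile C5 Q1" by (simp add: is_profile_def Q1_def mem5)
lemma pB1: "is_profile C4 B1" by (simp add: is_profile_def B1_def mem4)
lemma cQ1: "clones C5 Q1 c4 c0" by (simp add: clones_def Q1_def mem5)
lemma rQ1: "remove_cand c4 Q1 = B1" by (simp add: remove_cand_def Q1_def B1_def insert_Diff_if)
definition "Q2 = [{c1,c2},{c1,c3},{c0,c2,c3,c4}]"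
definition "B2 = [{c1,c2},{c1,c3},{c0,c2,c3}]"
lemma pQ2: "is_profile C5 Q2" by (simp add: is_profile_def Q2_def mem5)
lemma pB2: "is_profile C4 B2" by (simp add: is_profile_def B2_def mem4)
lemma cQ2: "clones C5 Q2 c4 c0" by (simp add: clones_def Q2_def mem5)
lemma rQ2: "remove_cand c4 Q2 = B2" by (simp add: remove_cand_def Q2_def B2_def insert_Diff_if)
definition "Q4 = [{c0,c1,c4},{c0,c2,c4},{c1,c2,c3}]"
definition "B4 = [{c0,c1},{c0,c2},{c1,c2,c3}]"
lemma pQ4: "is_profile C5 Q4" by (simp add: is_profile_def Q4_def mem5)
lemma pB4: "is_profile C4 B4" by (simp add: is_profile_def B4_def mem4)
lemma cQ4: "clones C5 Q4 c4 c0" by (simp add: clones_def Q4_def mem5)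
lemma rQ4: "remove_cand c4 Q4 = B4" by (simp add: remove_cand_def Q4_def B4_def insert_Diff_if)
definition "Q5 = [{c0,c1,c4},{c1,c2},{c0,c2,c3,c4}]"
definition "B5 = [{c0,c1},{c1,c2},{c0,c2,c3}]"
lemma pQ5: "is_profile C5 Q5" by (simp add: is_profile_def Q5_def mem5)
lemma pB5: "is_profile C4 B5" by (simp add: is_profile_def B5_def mem4)
lemma cQ5: "clones C5 Q5 c4 c0" by (simp add: clones_def Q5_def mem5)
lemma rQ5: "remove_cand c4 Q5 = B5" by (simp add: remove_cand_def Q5_def B5_def insert_Diff_if)

lemma ext_ex:
  assumes pQ: "is_profile C5 Q" and cQ: "clones C5 Q c4 c0" and rQ: "remove_cand c4 Q = B"
    and m: "ax L \<in> f C4 B" and L: "distinct L" "length L = 4" "set L \<subseteq> C4"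
  shows "\<exists>e i. e \<in> f C5 Q \<and> i \<le> 4 \<and> e = ax (take i L @ c4 # drop i L)"
proof -
  have "ax L \<in> f (C5 - {c4}) (remove_cand c4 Q)" using m C54 rQ by simp
  then obtain e where e: "e \<in> f C5 Q" "restrict_axis c4 e = ax L"
    using res2[OF fin5 pQ cQ] by blast
  have "card C4 = 4" using dst by (simp add: C4_def)
  hence sL: "set L = C4" using card_subset_eq[OF fin4 L(3)] L(1,2) by (simp add: distinct_card)
  have "e \<in> axes C5" using f_sub[OF fin5 pQ] e(1) by blast
  then obtain i where "i \<le> 4" "e = ax (take i L @ c4 # drop i L)" using ins5[OF _ e(2) L(1) sL] by blast
  thus ?thesis using e(1) by blast
qed

lemma main_False: False
proof -
  have N4_2: "h4 [True,False,True,False] = h4 [False,True,False,True]"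
    using h4r[of "[False,True,False,True]"] by simp
  have N4_3: "h4 [True,True,False,False] < h4 [True,False,False,True]"
  proof -
    have nI: "\<not> is_interval (ax [c0,c1,c2,c3]) {c0,c3}" by (rule not_int[of c0 "{c0,c3}" c3 c1]) simp_all
    have "h4 (map (\<lambda>x. x \<in> {c0,c3}) [c0,c3,c1,c2]) < h4 (map (\<lambda>x. x \<in> {c0,c3}) [c0,c1,c2,c3])"
      by (rule h4_int(2)[OF _ _ _ _ _ _ _ _ _ nI]) (auto simp: mem4 is_interval_def)
    thus ?thesis by simp
  qed
  have N4_4: "h4 [False,True,True,False] = h4 [True,True,False,False]"
  proof -
    have "h4 (map (\<lambda>x. x \<in> {c1,c2}) [c1,c2,c0,c3]) = h4 (map (\<lambda>x. x \<in> {c1,c2}) [c0,c1,c2,c3])"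
      by (rule h4_int(1)) (auto simp: mem4 is_interval_def)
    thus ?thesis by simp
  qed
  have N4_5: "h4 [True,True,False,False] < h4 [False,True,False,True]"
  proof -
    have nI: "\<not> is_interval (ax [c0,c1,c2,c3]) {c1,c3}" by (rule not_int[of c1 "{c1,c3}" c3 c2]) simp_all
    have "h4 (map (\<lambda>x. x \<in> {c1,c3}) [c1,c3,c0,c2]) < h4 (map (\<lambda>x. x \<in> {c1,c3}) [c0,c1,c2,c3])"
      by (rule h4_int(2)[OF _ _ _ _ _ _ _ _ _ nI]) (auto simp: mem4 is_interval_def)
    thus ?thesis by simp
  qed
  have N4_6: "h4 [False,False,True,True] = h4 [True,True,False,False]"
  proof -
    have "h4 (map (\<lambda>x. x \<in> {c2,c3}) [c2,c3,c0,c1]) = h4 (map (\<lambda>x. x \<in> {c2,c3}) [c0,c1,c2,c3])"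
      by (rule h4_int(1)) (auto simp: mem4 is_interval_def)
    thus ?thesis by simp
  qed
  have N4_8: "h4 [True,True,False,True] = h4 [True,False,True,True]"
    using h4r[of "[True,False,True,True]"] by simp
  have N4_9: "h4 [True,True,True,False] < h4 [True,False,True,True]"
  proof -
    have nI: "\<not> is_interval (ax [c0,c1,c2,c3]) {c0,c2,c3}" by (rule not_int[of c0 "{c0,c2,c3}" c3 c1]) simp_all
    have "h4 (map (\<lambda>x. x \<in> {c0,c2,c3}) [c0,c2,c3,c1]) < h4 (map (\<lambda>x. x \<in> {c0,c2,c3}) [c0,c1,c2,c3])"
      by (rule h4_int(2)[OF _ _ _ _ _ _ _ _ _ nI]) (auto simp: mem4 is_interval_def)
    thus ?thesis by simp
  qed
  have N4_10: "h4 [False,True,True,True] = h4 [True,True,True,False]"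
  proof -
    have "h4 (map (\<lambda>x. x \<in> {c1,c2,c3}) [c1,c2,c3,c0]) = h4 (map (\<lambda>x. x \<in> {c1,c2,c3}) [c0,c1,c2,c3])"
      by (rule h4_int(1)) (auto simp: mem4 is_interval_def)
    thus ?thesis by simp
  qed
  note F4 = N4_2 N4_3 N4_4 N4_5 N4_6 N4_8 N4_9 N4_10
  have N5_2: "h5 [True,False,True,False,False] = h5 [False,False,True,False,True]"
    using h5r[of "[False,False,True,False,True]"] by simp
  have N5_3: "h5 [True,False,False,True,False] = h5 [False,True,False,False,True]"
    using h5r[of "[False,True,False,False,True]"] by simp
  have N5_4: "h5 [True,True,False,False,False] < h5 [True,False,False,False,True]"
  proof -
    have nI: "\<not> is_interval (ax [c0,c1,c2,c3,c4]) {c0,c4}" by (rule not_int[of c0 "{c0,c4}" c4 c1]) simp_all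
    have "h5 (map (\<lambda>x. x \<in> {c0,c4}) [c0,c4,c1,c2,c3]) < h5 (map (\<lambda>x. x \<in> {c0,c4}) [c0,c1,c2,c3,c4])"
      by (rule h5_int(2)[OF _ _ _ _ _ _ _ _ _ nI]) (auto simp: mem5 is_interval_def)
    thus ?thesis by simp
  qed
  have N5_5: "h5 [False,True,True,False,False] = h5 [True,True,False,False,False]"
  proof -
    have "h5 (map (\<lambda>x. x \<in> {c1,c2}) [c1,c2,c0,c3,c4]) = h5 (map (\<lambda>x. x \<in> {c1,c2}) [c0,c1,c2,c3,c4])"
      by (rule h5_int(1)) (auto simp: mem5 is_interval_def)
    thus ?thesis by simp
  qed
  have N5_6: "h5 [True,True,False,False,False] < h5 [False,True,False,True,False]"
  proof -
    have nI: "\<not> is_interval (ax [c0,c1,c2,c3,c4]) {c1,c3}" by (rule not_int[of c1 "{c1,c3}" c3 c2]) simp_all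
    have "h5 (map (\<lambda>x. x \<in> {c1,c3}) [c1,c3,c0,c2,c4]) < h5 (map (\<lambda>x. x \<in> {c1,c3}) [c0,c1,c2,c3,c4])"
      by (rule h5_int(2)[OF _ _ _ _ _ _ _ _ _ nI]) (auto simp: mem5 is_interval_def)
    thus ?thesis by simp
  qed
  have N5_7: "h5 [True,True,False,False,False] < h5 [False,True,False,False,True]"
  proof -
    have nI: "\<not> is_interval (ax [c0,c1,c2,c3,c4]) {c1,c4}" by (rule not_int[of c1 "{c1,c4}" c4 c2]) simp_all
    have "h5 (map (\<lambda>x. x \<in> {c1,c4}) [c1,c4,c0,c2,c3]) < h5 (map (\<lambda>x. x \<in> {c1,c4}) [c0,c1,c2,c3,c4])"
      by (rule h5_int(2)[OF _ _ _ _ _ _ _ _ _ nI]) (auto simp: mem5 is_interval_def)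
    thus ?thesis by simp
  qed
  have N5_8: "h5 [False,False,True,True,False] = h5 [True,True,False,False,False]"
  proof -
    have "h5 (map (\<lambda>x. x \<in> {c2,c3}) [c2,c3,c0,c1,c4]) = h5 (map (\<lambda>x. x \<in> {c2,c3}) [c0,c1,c2,c3,c4])"
      by (rule h5_int(1)) (auto simp: mem5 is_interval_def)
    thus ?thesis by simp
  qed
  have N5_9: "h5 [True,True,False,False,False] < h5 [False,False,True,False,True]"
  proof -
    have nI: "\<not> is_interval (ax [c0,c1,c2,c3,c4]) {c2,c4}" by (rule not_int[of c2 "{c2,c4}" c4 c3]) simp_all
    have "h5 (map (\<lambda>x. x \<in> {c2,c4}) [c2,c4,c0,c1,c3]) < h5 (map (\<lambda>x. x \<in> {c2,c4}) [c0,c1,c2,c3,c4])"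
      by (rule h5_int(2)[OF _ _ _ _ _ _ _ _ _ nI]) (auto simp: mem5 is_interval_def)
    thus ?thesis by simp
  qed
  have N5_10: "h5 [False,False,False,True,True] = h5 [True,True,False,False,False]"
  proof -
    have "h5 (map (\<lambda>x. x \<in> {c3,c4}) [c3,c4,c0,c1,c2]) = h5 (map (\<lambda>x. x \<in> {c3,c4}) [c0,c1,c2,c3,c4])"
      by (rule h5_int(1)) (auto simp: mem5 is_interval_def)
    thus ?thesis by simp
  qed
  have N5_12: "h5 [True,True,False,True,False] = h5 [False,True,False,True,True]"
    using h5r[of "[False,True,False,True,True]"] by simp
  have N5_13: "h5 [True,True,False,False,True] = h5 [True,False,False,True,True]"
    using h5r[of "[True,False,False,True,True]"] by simp
  have N5_14: "h5 [True,False,True,True,False] = h5 [False,True,True,False,True]"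
    using h5r[of "[False,True,True,False,True]"] by simp
  have N5_15: "h5 [True,True,True,False,False] < h5 [True,False,True,False,True]"
  proof -
    have nI: "\<not> is_interval (ax [c0,c1,c2,c3,c4]) {c0,c2,c4}" by (rule not_int[of c0 "{c0,c2,c4}" c4 c1]) simp_all
    have "h5 (map (\<lambda>x. x \<in> {c0,c2,c4}) [c0,c2,c4,c1,c3]) < h5 (map (\<lambda>x. x \<in> {c0,c2,c4}) [c0,c1,c2,c3,c4])"
      by (rule h5_int(2)[OF _ _ _ _ _ _ _ _ _ nI]) (auto simp: mem5 is_interval_def)
    thus ?thesis by simp
  qed
  have N5_16: "h5 [True,True,True,False,False] < h5 [True,False,False,True,True]"
  proof -
    have nI: "\<not> is_interval (ax [c0,c1,c2,c3,c4]) {c0,c3,c4}" by (rule not_int[of c0 "{c0,c3,c4}" c4 c1]) simp_all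
    have "h5 (map (\<lambda>x. x \<in> {c0,c3,c4}) [c0,c3,c4,c1,c2]) < h5 (map (\<lambda>x. x \<in> {c0,c3,c4}) [c0,c1,c2,c3,c4])"
      by (rule h5_int(2)[OF _ _ _ _ _ _ _ _ _ nI]) (auto simp: mem5 is_interval_def)
    thus ?thesis by simp
  qed
  have N5_17: "h5 [False,True,True,True,False] = h5 [True,True,True,False,False]"
  proof -
    have "h5 (map (\<lambda>x. x \<in> {c1,c2,c3}) [c1,c2,c3,c0,c4]) = h5 (map (\<lambda>x. x \<in> {c1,c2,c3}) [c0,c1,c2,c3,c4])"
      by (rule h5_int(1)) (auto simp: mem5 is_interval_def)
    thus ?thesis by simp
  qed
  have N5_18: "h5 [True,True,True,False,False] < h5 [False,True,True,False,True]"
  proof -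
    have nI: "\<not> is_interval (ax [c0,c1,c2,c3,c4]) {c1,c2,c4}" by (rule not_int[of c1 "{c1,c2,c4}" c4 c3]) simp_all
    have "h5 (map (\<lambda>x. x \<in> {c1,c2,c4}) [c1,c2,c4,c0,c3]) < h5 (map (\<lambda>x. x \<in> {c1,c2,c4}) [c0,c1,c2,c3,c4])"
      by (rule h5_int(2)[OF _ _ _ _ _ _ _ _ _ nI]) (auto simp: mem5 is_interval_def)
    thus ?thesis by simp
  qed
  have N5_19: "h5 [True,True,True,False,False] < h5 [False,True,False,True,True]"
  proof -
    have nI: "\<not> is_interval (ax [c0,c1,c2,c3,c4]) {c1,c3,c4}" by (rule not_int[of c1 "{c1,c3,c4}" c4 c2]) simp_all
    have "h5 (map (\<lambda>x. x \<in> {c1,c3,c4}) [c1,c3,c4,c0,c2]) < h5 (map (\<lambda>x. x \<in> {c1,c3,c4}) [c0,c1,c2,c3,c4])"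
      by (rule h5_int(2)[OF _ _ _ _ _ _ _ _ _ nI]) (auto simp: mem5 is_interval_def)
    thus ?thesis by simp
  qed
  have N5_20: "h5 [False,False,True,True,True] = h5 [True,True,True,False,False]"
  proof -
    have "h5 (map (\<lambda>x. x \<in> {c2,c3,c4}) [c2,c3,c4,c0,c1]) = h5 (map (\<lambda>x. x \<in> {c2,c3,c4}) [c0,c1,c2,c3,c4])"
      by (rule h5_int(1)) (auto simp: mem5 is_interval_def)
    thus ?thesis by simp
  qed
  have N5_22: "h5 [True,True,True,False,True] = h5 [True,False,True,True,True]"
    using h5r[of "[True,False,True,True,True]"] by simp
  have N5_23: "h5 [True,True,True,True,False] < h5 [True,True,False,True,True]"
  proof -
    have nI: "\<not> is_interval (ax [c0,c1,c2,c3,c4]) {c0,c1,c3,c4}" by (rule not_int[of c0 "{c0,c1,c3,c4}" c4 c2]) simp_all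
    have "h5 (map (\<lambda>x. x \<in> {c0,c1,c3,c4}) [c0,c1,c3,c4,c2]) < h5 (map (\<lambda>x. x \<in> {c0,c1,c3,c4}) [c0,c1,c2,c3,c4])"
      by (rule h5_int(2)[OF _ _ _ _ _ _ _ _ _ nI]) (auto simp: mem5 is_interval_def)
    thus ?thesis by simp
  qed
  have N5_24: "h5 [True,True,True,True,False] < h5 [True,False,True,True,True]"
  proof -
    have nI: "\<not> is_interval (ax [c0,c1,c2,c3,c4]) {c0,c2,c3,c4}" by (rule not_int[of c0 "{c0,c2,c3,c4}" c4 c1]) simp_all
    have "h5 (map (\<lambda>x. x \<in> {c0,c2,c3,c4}) [c0,c2,c3,c4,c1]) < h5 (map (\<lambda>x. x \<in> {c0,c2,c3,c4}) [c0,c1,c2,c3,c4])"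
      by (rule h5_int(2)[OF _ _ _ _ _ _ _ _ _ nI]) (auto simp: mem5 is_interval_def)
    thus ?thesis by simp
  qed
  have N5_25: "h5 [False,True,True,True,True] = h5 [True,True,True,True,False]"
  proof -
    have "h5 (map (\<lambda>x. x \<in> {c1,c2,c3,c4}) [c1,c2,c3,c4,c0]) = h5 (map (\<lambda>x. x \<in> {c1,c2,c3,c4}) [c0,c1,c2,c3,c4])"
      by (rule h5_int(1)) (auto simp: mem5 is_interval_def)
    thus ?thesis by simp
  qed
  note F5 = N5_2 N5_3 N5_4 N5_5 N5_6 N5_7 N5_8 N5_9 N5_10 N5_12 N5_13 N5_14 N5_15 N5_16 N5_17 N5_18 N5_19 N5_20 N5_22 N5_23 N5_24 N5_25
  consider (k1) "h4 [True,False,True,True] - h4 [True,True,True,False] \<le> h4 [False,True,False,True] - h4 [True,True,False,False] \<and> h4 [True,False,True,True] - h4 [True,True,True,False] \<le> h4 [True,False,False,True] - h4 [True,True,False,False]" | (k2) "\<not> (h4 [True,False,True,True] - h4 [True,True,True,False] \<le> h4 [False,True,False,True] - h4 [True,True,False,False] \<and> h4 [True,False,True,True] - h4 [True,True,True,False] \<le> h4 [True,False,False,True] - h4 [True,True,False,False]) \<and> h4 [True,False,False,True] - h4 [True,True,False,False] \<le> h4 [False,True,False,True] - h4 [True,True,False,False]" | (k3) "\<not> (h4 [True,False,True,True] - h4 [True,True,True,False] \<le> h4 [False,True,False,True] - h4 [True,True,False,False] \<and> h4 [True,False,True,True] - h4 [True,True,True,False] \<le> h4 [True,False,False,True] - h4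 [True,True,False,False]) \<and> \<not> h4 [True,False,False,True] - h4 [True,True,False,False] \<le> h4 [False,True,False,True] - h4 [True,True,False,False]" by blast
  then show False
  proof cases
    case k1
  have m1: "ax [c0,c2,c1,c3] \<in> f C4 B2"
    apply (rule mem4_I[OF pB2])
       apply (simp, simp, simp add: mem4)
    apply (simp del: ax.simps add: perms4_def B2_def ev4)
    apply (intro conjI; use F4 k1 in linarith)
    done
  have m2: "ax [c0,c1,c2,c3] \<in> f C4 B5"
    apply (rule mem4_I[OF pB5])
       apply (simp, simp, simp add: mem4)
    apply (simp del: ax.simps add: perms4_def B5_def ev4)
    apply (intro conjI; use F4 k1 in linarith)
    done
  have "\<exists>e3 i4. e3 \<in> f C5 Q2 \<and> i4 \<le> 4 \<and> e3 = ax (take i4 [c0,c2,c1,c3] @ c4 # drop i4 [c0,c2,c1,c3])"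
    by (rule ext_ex[OF pQ2 cQ2 rQ2 m1]) (simp_all add: mem4)
  then obtain e3 i4 where e3: "e3 \<in> f C5 Q2" "i4 \<le> 4" "e3 = ax (take i4 [c0,c2,c1,c3] @ c4 # drop i4 [c0,c2,c1,c3])"
    by blast
  have e3D: "e3 = ax [c4,c0,c2,c1,c3] \<or> e3 = ax [c0,c4,c2,c1,c3] \<or> e3 = ax [c0,c2,c4,c1,c3] \<or> e3 = ax [c0,c2,c1,c4,c3] \<or> e3 = ax [c0,c2,c1,c3,c4]"
    using le4[OF e3(2)] e3(3) by (auto simp del: ax.simps)
  have b5: "ax [c0,c2,c1,c4,c3] \<notin> f C5 Q2"
  proof
    assume H: "ax [c0,c2,c1,c4,c3] \<in> f C5 Q2"
    show False by (rule prox_viol[OF fin5 pQ2 cQ2 H, of c1 "{c0,c2,c3,c4}"]) (simp_all add: Q2_def)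
  qed
  have b5D: "e3 \<noteq> ax [c0,c2,c1,c4,c3]" using e3(1) b5 by blast
  have b6: "ax [c0,c2,c1,c3,c4] \<notin> f C5 Q2"
  proof
    assume H: "ax [c0,c2,c1,c3,c4] \<in> f C5 Q2"
    show False by (rule prox_viol[OF fin5 pQ2 cQ2 H, of c1 "{c0,c2,c3,c4}"]) (simp_all add: Q2_def)
  qed
  have b6D: "e3 \<noteq> ax [c0,c2,c1,c3,c4]" using e3(1) b6 by blast
  have e3G: "e3 = ax [c4,c0,c2,c1,c3] \<or> e3 = ax [c0,c4,c2,c1,c3] \<or> e3 = ax [c0,c2,c4,c1,c3]"
    using e3D b5D b6D by (simp del: ax.simps)
  have lt7: "sc C5 Q2 e3 < sc C5 Q2 (ax [c0,c2,c1,c3,c4])"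
    by (rule argmin_lt[OF sym_rep[OF fin5 pQ2] e3(1) _ b6]) (simp del: ax.simps add: ev5)
  have "\<exists>e8 i9. e8 \<in> f C5 Q5 \<and> i9 \<le> 4 \<and> e8 = ax (take i9 [c0,c1,c2,c3] @ c4 # drop i9 [c0,c1,c2,c3])"
    by (rule ext_ex[OF pQ5 cQ5 rQ5 m2]) (simp_all add: mem4)
  then obtain e8 i9 where e8: "e8 \<in> f C5 Q5" "i9 \<le> 4" "e8 = ax (take i9 [c0,c1,c2,c3] @ c4 # drop i9 [c0,c1,c2,c3])"
    by blast
  have e8D: "e8 = ax [c4,c0,c1,c2,c3] \<or> e8 = ax [c0,c4,c1,c2,c3] \<or> e8 = ax [c0,c1,c4,c2,c3] \<or> e8 = ax [c0,c1,c2,c4,c3] \<or> e8 = ax [c0,c1,c2,c3,c4]"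
    using le4[OF e8(2)] e8(3) by (auto simp del: ax.simps)
  have b10: "ax [c0,c1,c4,c2,c3] \<notin> f C5 Q5"
  proof
    assume H: "ax [c0,c1,c4,c2,c3] \<in> f C5 Q5"
    show False by (rule prox_viol[OF fin5 pQ5 cQ5 H, of c1 "{c0,c2,c3,c4}"]) (simp_all add: Q5_def)
  qed
  have b10D: "e8 \<noteq> ax [c0,c1,c4,c2,c3]" using e8(1) b10 by blast
  have b11: "ax [c0,c1,c2,c4,c3] \<notin> f C5 Q5"
  proof
    assume H: "ax [c0,c1,c2,c4,c3] \<in> f C5 Q5"
    show False by (rule prox_viol[OF fin5 pQ5 cQ5 H, of c2 "{c0,c1,c4}"]) (simp_all add: Q5_def)
  qed
  have b11D: "e8 \<noteq> ax [c0,c1,c2,c4,c3]" using e8(1) b11 by blast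
  have b12: "ax [c0,c1,c2,c3,c4] \<notin> f C5 Q5"
  proof
    assume H: "ax [c0,c1,c2,c3,c4] \<in> f C5 Q5"
    show False by (rule prox_viol[OF fin5 pQ5 cQ5 H, of c2 "{c0,c1,c4}"]) (simp_all add: Q5_def)
  qed
  have b12D: "e8 \<noteq> ax [c0,c1,c2,c3,c4]" using e8(1) b12 by blast
  have e8G: "e8 = ax [c4,c0,c1,c2,c3] \<or> e8 = ax [c0,c4,c1,c2,c3]"
    using e8D b10D b11D b12D by (simp del: ax.simps)
  have le13: "sc C5 Q5 e8 \<le> sc C5 Q5 (ax [c2,c1,c0,c4,c3])"
    by (rule argmin_le[OF sym_rep[OF fin5 pQ5] e8(1)]) (simp del: ax.simps add: ev5)
    show False
    apply (insert e3G e8G lt7 le13)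
    apply (elim disjE; simp del: ax.simps add: Q2_def Q5_def ev5; use F5 in linarith)
    done
  next
    case k2
  have m14: "ax [c0,c1,c3,c2] \<in> f C4 B4"
    apply (rule mem4_I[OF pB4])
       apply (simp, simp, simp add: mem4)
    apply (simp del: ax.simps add: perms4_def B4_def ev4)
    apply (intro conjI; use F4 k2 in linarith)
    done
  have n15: "ax [c1,c0,c2,c3] \<notin> f C4 B4"
  proof
    assume H: "ax [c1,c0,c2,c3] \<in> f C4 B4"
    have "sc C4 B4 (ax [c1,c0,c2,c3]) \<le> sc C4 B4 (ax [c0,c1,c3,c2])"
      by (rule argmin_le[OF sym_rep[OF fin4 pB4] H]) (simp del: ax.simps add: ev4)
    then show False
      apply (simp del: ax.simps add: B4_def ev4)
      using F4 k2 by linarith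
  qed
  have "\<exists>e16 i17. e16 \<in> f C5 Q4 \<and> i17 \<le> 4 \<and> e16 = ax (take i17 [c0,c1,c3,c2] @ c4 # drop i17 [c0,c1,c3,c2])"
    by (rule ext_ex[OF pQ4 cQ4 rQ4 m14]) (simp_all add: mem4)
  then obtain e16 i17 where e16: "e16 \<in> f C5 Q4" "i17 \<le> 4" "e16 = ax (take i17 [c0,c1,c3,c2] @ c4 # drop i17 [c0,c1,c3,c2])"
    by blast
  have e16D: "e16 = ax [c4,c0,c1,c3,c2] \<or> e16 = ax [c0,c4,c1,c3,c2] \<or> e16 = ax [c0,c1,c4,c3,c2] \<or> e16 = ax [c0,c1,c3,c4,c2] \<or> e16 = ax [c0,c1,c3,c2,c4]"
    using le4[OF e16(2)] e16(3) by (auto simp del: ax.simps)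
  have b18: "ax [c0,c1,c4,c3,c2] \<notin> f C5 Q4"
  proof
    assume H: "ax [c0,c1,c4,c3,c2] \<in> f C5 Q4"
    show False by (rule prox_viol[OF fin5 pQ4 cQ4 H, of c1 "{c0,c2,c4}"]) (simp_all add: Q4_def)
  qed
  have b18D: "e16 \<noteq> ax [c0,c1,c4,c3,c2]" using e16(1) b18 by blast
  have b19: "ax [c0,c1,c3,c4,c2] \<notin> f C5 Q4"
  proof
    assume H: "ax [c0,c1,c3,c4,c2] \<in> f C5 Q4"
    show False by (rule prox_viol[OF fin5 pQ4 cQ4 H, of c3 "{c0,c1,c4}"]) (simp_all add: Q4_def)
  qed
  have b19D: "e16 \<noteq> ax [c0,c1,c3,c4,c2]" using e16(1) b19 by blast
  have b20: "ax [c0,c1,c3,c2,c4] \<notin> f C5 Q4"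
  proof
    assume H: "ax [c0,c1,c3,c2,c4] \<in> f C5 Q4"
    show False by (rule prox_viol[OF fin5 pQ4 cQ4 H, of c3 "{c0,c1,c4}"]) (simp_all add: Q4_def)
  qed
  have b20D: "e16 \<noteq> ax [c0,c1,c3,c2,c4]" using e16(1) b20 by blast
  have e16G: "e16 = ax [c4,c0,c1,c3,c2] \<or> e16 = ax [c0,c4,c1,c3,c2]"
    using e16D b18D b19D b20D by (simp del: ax.simps)
  have z21: "ax [c1,c0,c4,c2,c3] \<notin> f C5 Q4"
  proof
    assume H: "ax [c1,c0,c4,c2,c3] \<in> f C5 Q4"
    have "restrict_axis c4 (ax [c1,c0,c4,c2,c3]) \<in> f C4 B4" using res1[OF fin5 pQ4 cQ4 H] C54 rQ4 by simp
    moreover have "restrict_axis c4 (ax [c1,c0,c4,c2,c3]) = ax [c1,c0,c2,c3]" by (simp del: ax.simps add: restrict_ax)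
    ultimately show False using n15 by simp
  qed
  have lt22: "sc C5 Q4 e16 < sc C5 Q4 (ax [c1,c0,c4,c2,c3])"
    by (rule argmin_lt[OF sym_rep[OF fin5 pQ4] e16(1) _ z21]) (simp del: ax.simps add: ev5)
    show False
    apply (insert e16G lt22)
    apply (elim disjE; simp del: ax.simps add: Q4_def ev5; use F5 in linarith)
    done
  next
    case k3
  have m23: "ax [c0,c1,c2,c3] \<in> f C4 B1"
    apply (rule mem4_I[OF pB1])
       apply (simp, simp, simp add: mem4)
    apply (simp del: ax.simps add: perms4_def B1_def ev4)
    apply (intro conjI; use F4 k3 in linarith)
    done
  have m24: "ax [c2,c1,c0,c3] \<in> f C4 B1"
    apply (rule mem4_I[OF pB1])
       apply (simp, simp, simp add: mem4)
    apply (simp del: ax.simps add: perms4_def B1_def ev4)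
    apply (intro conjI; use F4 k3 in linarith)
    done
  have n25: "ax [c2,c3,c0,c1] \<notin> f C4 B1"
  proof
    assume H: "ax [c2,c3,c0,c1] \<in> f C4 B1"
    have "sc C4 B1 (ax [c2,c3,c0,c1]) \<le> sc C4 B1 (ax [c0,c1,c2,c3])"
      by (rule argmin_le[OF sym_rep[OF fin4 pB1] H]) (simp del: ax.simps add: ev4)
    then show False
      apply (simp del: ax.simps add: B1_def ev4)
      using F4 k3 by linarith
  qed
  have m26: "ax [c0,c2,c3,c1] \<in> f C4 B2"
    apply (rule mem4_I[OF pB2])
       apply (simp, simp, simp add: mem4)
    apply (simp del: ax.simps add: perms4_def B2_def ev4)
    apply (intro conjI; use F4 k3 in linarith)
    done
  have n27: "ax [c1,c2,c0,c3] \<notin> f C4 B2"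
  proof
    assume H: "ax [c1,c2,c0,c3] \<in> f C4 B2"
    have "sc C4 B2 (ax [c1,c2,c0,c3]) \<le> sc C4 B2 (ax [c0,c2,c3,c1])"
      by (rule argmin_le[OF sym_rep[OF fin4 pB2] H]) (simp del: ax.simps add: ev4)
    then show False
      apply (simp del: ax.simps add: B2_def ev4)
      using F4 k3 by linarith
  qed
  have n28: "ax [c1,c0,c2,c3] \<notin> f C4 B2"
  proof
    assume H: "ax [c1,c0,c2,c3] \<in> f C4 B2"
    have "sc C4 B2 (ax [c1,c0,c2,c3]) \<le> sc C4 B2 (ax [c0,c2,c3,c1])"
      by (rule argmin_le[OF sym_rep[OF fin4 pB2] H]) (simp del: ax.simps add: ev4)
    then show False
      apply (simp del: ax.simps add: B2_def ev4)
      using F4 k3 by linarith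
  qed
  have "\<exists>e29 i30. e29 \<in> f C5 Q1 \<and> i30 \<le> 4 \<and> e29 = ax (take i30 [c0,c1,c2,c3] @ c4 # drop i30 [c0,c1,c2,c3])"
    by (rule ext_ex[OF pQ1 cQ1 rQ1 m23]) (simp_all add: mem4)
  then obtain e29 i30 where e29: "e29 \<in> f C5 Q1" "i30 \<le> 4" "e29 = ax (take i30 [c0,c1,c2,c3] @ c4 # drop i30 [c0,c1,c2,c3])"
    by blast
  have e29D: "e29 = ax [c4,c0,c1,c2,c3] \<or> e29 = ax [c0,c4,c1,c2,c3] \<or> e29 = ax [c0,c1,c4,c2,c3] \<or> e29 = ax [c0,c1,c2,c4,c3] \<or> e29 = ax [c0,c1,c2,c3,c4]"
    using le4[OF e29(2)] e29(3) by (auto simp del: ax.simps)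
  have b31: "ax [c0,c1,c2,c4,c3] \<notin> f C5 Q1"
  proof
    assume H: "ax [c0,c1,c2,c4,c3] \<in> f C5 Q1"
    show False by (rule prox_viol[OF fin5 pQ1 cQ1 H, of c2 "{c0,c1,c4}"]) (simp_all add: Q1_def)
  qed
  have b31D: "e29 \<noteq> ax [c0,c1,c2,c4,c3]" using e29(1) b31 by blast
  have b32: "ax [c0,c1,c2,c3,c4] \<notin> f C5 Q1"
  proof
    assume H: "ax [c0,c1,c2,c3,c4] \<in> f C5 Q1"
    show False by (rule prox_viol[OF fin5 pQ1 cQ1 H, of c2 "{c0,c1,c4}"]) (simp_all add: Q1_def)
  qed
  have b32D: "e29 \<noteq> ax [c0,c1,c2,c3,c4]" using e29(1) b32 by blast
  have e29G: "e29 = ax [c4,c0,c1,c2,c3] \<or> e29 = ax [c0,c4,c1,c2,c3] \<or> e29 = ax [c0,c1,c4,c2,c3]"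
    using e29D b31D b32D by (simp del: ax.simps)
  have "\<exists>e33 i34. e33 \<in> f C5 Q1 \<and> i34 \<le> 4 \<and> e33 = ax (take i34 [c2,c1,c0,c3] @ c4 # drop i34 [c2,c1,c0,c3])"
    by (rule ext_ex[OF pQ1 cQ1 rQ1 m24]) (simp_all add: mem4)
  then obtain e33 i34 where e33: "e33 \<in> f C5 Q1" "i34 \<le> 4" "e33 = ax (take i34 [c2,c1,c0,c3] @ c4 # drop i34 [c2,c1,c0,c3])"
    by blast
  have e33D: "e33 = ax [c4,c2,c1,c0,c3] \<or> e33 = ax [c2,c4,c1,c0,c3] \<or> e33 = ax [c2,c1,c4,c0,c3] \<or> e33 = ax [c2,c1,c0,c4,c3] \<or> e33 = ax [c2,c1,c0,c3,c4]"
    using le4[OF e33(2)] e33(3) by (auto simp del: ax.simps)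
  have b35: "ax [c4,c2,c1,c0,c3] \<notin> f C5 Q1"
  proof
    assume H: "ax [c4,c2,c1,c0,c3] \<in> f C5 Q1"
    show False by (rule prox_viol[OF fin5 pQ1 cQ1 H, of c2 "{c0,c1,c4}"]) (simp_all add: Q1_def)
  qed
  have b35D: "e33 \<noteq> ax [c4,c2,c1,c0,c3]" using e33(1) b35 by blast
  have b36: "ax [c2,c1,c0,c3,c4] \<notin> f C5 Q1"
  proof
    assume H: "ax [c2,c1,c0,c3,c4] \<in> f C5 Q1"
    show False by (rule prox_viol[OF fin5 pQ1 cQ1 H, of c3 "{c0,c1,c4}"]) (simp_all add: Q1_def)
  qed
  have b36D: "e33 \<noteq> ax [c2,c1,c0,c3,c4]" using e33(1) b36 by blast
  have e33G: "e33 = ax [c2,c4,c1,c0,c3] \<or> e33 = ax [c2,c1,c4,c0,c3] \<or> e33 = ax [c2,c1,c0,c4,c3]"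
    using e33D b35D b36D by (simp del: ax.simps)
  have z37: "ax [c2,c3,c0,c1,c4] \<notin> f C5 Q1"
  proof
    assume H: "ax [c2,c3,c0,c1,c4] \<in> f C5 Q1"
    have "restrict_axis c4 (ax [c2,c3,c0,c1,c4]) \<in> f C4 B1" using res1[OF fin5 pQ1 cQ1 H] C54 rQ1 by simp
    moreover have "restrict_axis c4 (ax [c2,c3,c0,c1,c4]) = ax [c2,c3,c0,c1]" by (simp del: ax.simps add: restrict_ax)
    ultimately show False using n25 by simp
  qed
  have lt38: "sc C5 Q1 e29 < sc C5 Q1 (ax [c2,c3,c0,c1,c4])"
    by (rule argmin_lt[OF sym_rep[OF fin5 pQ1] e29(1) _ z37]) (simp del: ax.simps add: ev5)
  have le39: "sc C5 Q1 e29 \<le> sc C5 Q1 e33"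
    by (rule argmin_le[OF sym_rep[OF fin5 pQ1] e29(1)]) (use f_sub[OF fin5 pQ1] e33(1) in blast)
  have le40: "sc C5 Q1 e33 \<le> sc C5 Q1 e29"
    by (rule argmin_le[OF sym_rep[OF fin5 pQ1] e33(1)]) (use f_sub[OF fin5 pQ1] e29(1) in blast)
  have "\<exists>e41 i42. e41 \<in> f C5 Q2 \<and> i42 \<le> 4 \<and> e41 = ax (take i42 [c0,c2,c3,c1] @ c4 # drop i42 [c0,c2,c3,c1])"
    by (rule ext_ex[OF pQ2 cQ2 rQ2 m26]) (simp_all add: mem4)
  then obtain e41 i42 where e41: "e41 \<in> f C5 Q2" "i42 \<le> 4" "e41 = ax (take i42 [c0,c2,c3,c1] @ c4 # drop i42 [c0,c2,c3,c1])"
    by blast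
  have e41D: "e41 = ax [c4,c0,c2,c3,c1] \<or> e41 = ax [c0,c4,c2,c3,c1] \<or> e41 = ax [c0,c2,c4,c3,c1] \<or> e41 = ax [c0,c2,c3,c4,c1] \<or> e41 = ax [c0,c2,c3,c1,c4]"
    using le4[OF e41(2)] e41(3) by (auto simp del: ax.simps)
  have b43: "ax [c0,c2,c3,c1,c4] \<notin> f C5 Q2"
  proof
    assume H: "ax [c0,c2,c3,c1,c4] \<in> f C5 Q2"
    show False by (rule prox_viol[OF fin5 pQ2 cQ2 H, of c1 "{c0,c2,c3,c4}"]) (simp_all add: Q2_def)
  qed
  have b43D: "e41 \<noteq> ax [c0,c2,c3,c1,c4]" using e41(1) b43 by blast
  have e41G: "e41 = ax [c4,c0,c2,c3,c1] \<or> e41 = ax [c0,c4,c2,c3,c1] \<or> e41 = ax [c0,c2,c4,c3,c1] \<or> e41 = ax [c0,c2,c3,c4,c1]"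
    using e41D b43D by (simp del: ax.simps)
  have z44: "ax [c1,c2,c0,c3,c4] \<notin> f C5 Q2"
  proof
    assume H: "ax [c1,c2,c0,c3,c4] \<in> f C5 Q2"
    have "restrict_axis c4 (ax [c1,c2,c0,c3,c4]) \<in> f C4 B2" using res1[OF fin5 pQ2 cQ2 H] C54 rQ2 by simp
    moreover have "restrict_axis c4 (ax [c1,c2,c0,c3,c4]) = ax [c1,c2,c0,c3]" by (simp del: ax.simps add: restrict_ax)
    ultimately show False using n27 by simp
  qed
  have z45: "ax [c1,c0,c2,c3,c4] \<notin> f C5 Q2"
  proof
    assume H: "ax [c1,c0,c2,c3,c4] \<in> f C5 Q2"
    have "restrict_axis c4 (ax [c1,c0,c2,c3,c4]) \<in> f C4 B2" using res1[OF fin5 pQ2 cQ2 H] C54 rQ2 by simp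
    moreover have "restrict_axis c4 (ax [c1,c0,c2,c3,c4]) = ax [c1,c0,c2,c3]" by (simp del: ax.simps add: restrict_ax)
    ultimately show False using n28 by simp
  qed
  have lt46: "sc C5 Q2 e41 < sc C5 Q2 (ax [c1,c2,c0,c3,c4])"
    by (rule argmin_lt[OF sym_rep[OF fin5 pQ2] e41(1) _ z44]) (simp del: ax.simps add: ev5)
  have lt47: "sc C5 Q2 e41 < sc C5 Q2 (ax [c1,c0,c2,c3,c4])"
    by (rule argmin_lt[OF sym_rep[OF fin5 pQ2] e41(1) _ z45]) (simp del: ax.simps add: ev5)
    show False
    apply (insert e29G e33G e41G lt38 le39 le40 lt46 lt47)
    apply (elim disjE; simp del: ax.simps add: Q1_def Q2_def ev5; use F5 in linarith)
    done
  qed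
qed

end

theorem mainTheorem11:
  assumes "infinite (UNIV :: 'a set)"
  shows "\<not> (\<exists>f :: 'a set \<Rightarrow> 'a set list \<Rightarrow> 'a rel set.
             axis_rule f \<and> scoring_rule f \<and> neutral f \<and> consistent_with_linearity f \<and>
             resistant_to_cloning f \<and> clone_proximity f)"
proof
  assume "\<exists>f :: 'a set \<Rightarrow> 'a set list \<Rightarrow> 'a rel set.
             axis_rule f \<and> scoring_rule f \<and> neutral f \<and> consistent_with_linearity f \<and>
             resistant_to_cloning f \<and> clone_proximity f"
  then obtain f :: "'a set \<Rightarrow> 'a set list \<Rightarrow> 'a rel set" where
    f: "axis_rule f" "scoring_rule f" "neutral f" "consistent_with_linearity f"
       "resistant_to_cloning f" "clone_proximity f" by blast
  from f(2)[unfolded scoring_rule_def] obtain cost :: "'a set \<Rightarrow> 'a set \<Rightarrow> 'a rel \<Rightarrow> real" where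
    cost0: "(\<forall>C. finite C \<longrightarrow> (\<forall>A r. A \<noteq> {} \<and> A \<subseteq> C \<and> r \<in> axes C \<longrightarrow> cost C A r \<ge> 0)) \<and>
      (\<forall>C P. finite C \<and> is_profile C P \<longrightarrow>
         f C P = {r \<in> axes C. \<forall>r'\<in>axes C.
                    (\<Sum>A\<leftarrow>P. cost C A r) \<le> (\<Sum>A\<leftarrow>P. cost C A r')})" ..
  note cost = conjunct2[OF cost0]
  obtain B :: "'a set" where B: "finite B" "card B = 5"
    using infinite_arbitrarily_large[OF assms] by blast
  obtain xs where xs: "set xs = B" "distinct xs" using finite_distinct_list[OF B(1)] by blast
  have "length xs = 5" using xs B(2) distinct_card by metis
  then obtain c0 c1 c2 c3 c4 where "xs = [c0,c1,c2,c3,c4]"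
    by (auto simp: numeral_eq_Suc length_Suc_conv)
  hence d: "distinct [c0,c1,c2,c3,c4]" using xs(2) by simp
  interpret AR5 f cost c0 c1 c2 c3 c4
    proof unfold_locales
    show "axis_rule f" "neutral f" "consistent_with_linearity f" "resistant_to_cloning f" "clone_proximity f"
      using f by auto
    show "distinct [c0,c1,c2,c3,c4]" using d .
    fix C :: "'a set" and P assume "finite C" "is_profile C P"
    show "f C P = {r \<in> axes C. \<forall>r'\<in>axes C. (\<Sum>A\<leftarrow>P. cost C A r) \<le> (\<Sum>A\<leftarrow>P. cost C A r')}"
      by (rule cost[rule_format, OF conjI[OF \<open>finite C\<close> \<open>is_profile C P\<close>]])
  qed
  show False by (rule main_False)
qed


end
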